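(* Let $K$ be a division ring and $M,N\ge2$ integers. Let $G$ be a group and let $c,d\in K[G]$ have ranks $M$ and $N$ respectively, both contain the identity of $G$ in their supports, and satisfy $cd=1$. Write $c=r_0c_0+\dots+r_{M-1}c_{M-1}$ and $d=s_0d_0+\dots+s_{N-1}d_{N-1}$ with pairwise distinct $c_i\in G$, pairwise distinct $d_j\in G$, nonzero $r_i,s_j\in K$, and $c_0=d_0=1$. Let $\sigma$ be the partition of $\{0,\dots,M-1\}\times\{0,\dots,N-1\}$ with $(i,j)\sim_\sigma(i',j')$ iff $c_id_j=c_{i'}d_{j'}$. (a) Suppose that for every $m$ with $2\le m<M$, every group $G'$ and all $x,y\in K[G']$ of ranks $m$ and $N$, $xy=1$ implies $yx=1$. Then $\sigma$ is row connected; moreover every partition $\pi\le\sigma$ that is realizable with $r_0,\dots,r_{M-1},s_0,\dots,s_{N-1}$ is row connected. (b) Suppose that for every $n$ with $2\le n<N$, every group $G'$ and all $x,y\in K[G']$ of ranks $M$ and $n$, $xy=1$ implies $yx=1$. Then $\sigma$ is column connected; moreover every partition $\pi\le\sigma$ that is realizable with $r_0,\dots,r_{M-1},s_0,\dots,s_{N-1}$ is column connected.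
   Context: $K[G]$ is the group ring; the rank of an element is the number of group elements with nonzero coefficient (its support). For a partition $\pi$ of $\{0,\dots,M-1\}\times\{0,\dots,N-1\}$, $(i,j)\sim_\pi(i',j')$ means the pairs lie in the same block. $\pi\le\sigma$ means every block of $\pi$ is contained in a block of $\sigma$. $\pi$ is realizable with nonzero $r_0,\dots,r_{M-1},s_0,\dots,s_{N-1}\in K$ if for each block $E$, $\sum_{(i,j)\in E}r_is_j$ equals $1$ if $(0,0)\in E$ and $0$ otherwise. Let $\sim_r$ be the equivalence relation on $\{0,\dots,M-1\}$ generated by $i\sim_r i'$ whenever there exist $j,j'$ with $(i,j)\sim_\pi(i',j')$; $\pi$ is row connected if $\sim_r$ has a single class. Similarly $\sim_c$ on $\{0,\dots,N-1\}$ is generated by $j\sim_c j'$ whenever there exist $i,i'$ with $(i,j)\sim_\pi(i',j')$; $\pi$ is column connected if $\sim_c$ has a single class. *)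

theory Defs
  imports "HOL-Algebra.Group" "HOL-Library.Disjoint_Sets"
begin

text \<open>Group ring K[G] over a division ring K: finitely supported functions
  from the carrier of the group G to K (zero outside the carrier).\<close>

definition gr_elem :: "('a, 'm) monoid_scheme \<Rightarrow> ('a \<Rightarrow> 'k::zero) \<Rightarrow> bool" where
  "gr_elem G x \<longleftrightarrow> finite {g. x g \<noteq> 0} \<and> (\<forall>g. g \<notin> carrier G \<longrightarrow> x g = 0)"

definition gr_supp :: "('a \<Rightarrow> 'k::zero) \<Rightarrow> 'a set" where
  "gr_supp x = {g. x g \<noteq> 0}"

definition gr_rank :: "('a \<Rightarrow> 'k::zero) \<Rightarrow> nat" where
  "gr_rank x = card (gr_supp x)"

text \<open>(x y)(g) = sum over h k = g of x(h) y(k)\<close>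
definition gr_mult :: "('a, 'm) monoid_scheme \<Rightarrow> ('a \<Rightarrow> 'k::semiring_0) \<Rightarrow> ('a \<Rightarrow> 'k) \<Rightarrow> ('a \<Rightarrow> 'k)" where
  "gr_mult G x y = (\<lambda>g. if g \<in> carrier G
      then (\<Sum>h\<in>gr_supp x. x h * y (inv\<^bsub>G\<^esub> h \<otimes>\<^bsub>G\<^esub> g)) else 0)"

definition gr_one :: "('a, 'm) monoid_scheme \<Rightarrow> ('a \<Rightarrow> 'k::{zero,one})" where
  "gr_one G = (\<lambda>g. if g = \<one>\<^bsub>G\<^esub> then 1 else 0)"

definition gr_df :: "'k::division_ring itself \<Rightarrow> ('a, 'm) monoid_scheme \<Rightarrow> nat \<Rightarrow> nat \<Rightarrow> bool" where
  "gr_df _ G m n \<longleftrightarrow> (\<forall>x y :: 'a \<Rightarrow> 'k. gr_elem G x \<and> gr_elem G y \<and> gr_rank x = m \<and> gr_rank y = n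
      \<and> gr_mult G x y = gr_one G \<longrightarrow> gr_mult G y x = gr_one G)"

definition part_le :: "'a set set \<Rightarrow> 'a set set \<Rightarrow> bool" where
  "part_le \<pi> \<sigma> \<longleftrightarrow> (\<forall>E\<in>\<pi>. \<exists>F\<in>\<sigma>. E \<subseteq> F)"

definition realizable :: "(nat \<times> nat) set set \<Rightarrow> (nat \<Rightarrow> 'k::ring_1) \<Rightarrow> (nat \<Rightarrow> 'k) \<Rightarrow> bool" where
  "realizable \<pi> r s \<longleftrightarrow> (\<forall>E\<in>\<pi>. (\<Sum>(i,j)\<in>E. r i * s j) = (if (0,0) \<in> E then 1 else 0))"

definition row_rel :: "(nat \<times> nat) set set \<Rightarrow> (nat \<times> nat) set" where
  "row_rel \<pi> = {(i, i'). \<exists>j j'. \<exists>E\<in>\<pi>. (i, j) \<in> E \<and> (i', j') \<in> E}"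

definition col_rel :: "(nat \<times> nat) set set \<Rightarrow> (nat \<times> nat) set" where
  "col_rel \<pi> = {(j, j'). \<exists>i i'. \<exists>E\<in>\<pi>. (i, j) \<in> E \<and> (i', j') \<in> E}"

definition row_connected :: "nat \<Rightarrow> (nat \<times> nat) set set \<Rightarrow> bool" where
  "row_connected M \<pi> \<longleftrightarrow> (\<forall>i<M. \<forall>i'<M. (i, i') \<in> (row_rel \<pi> \<union> (row_rel \<pi>)\<inverse>)\<^sup>*)"

definition col_connected :: "nat \<Rightarrow> (nat \<times> nat) set set \<Rightarrow> bool" where
  "col_connected N \<pi> \<longleftrightarrow> (\<forall>j<N. \<forall>j'<N. (j, j') \<in> (col_rel \<pi> \<union> (col_rel \<pi>)\<inverse>)\<^sup>*)"

definition sigma_part :: "('a, 'm) monoid_scheme \<Rightarrow> nat \<Rightarrow> nat \<Rightarrow> (nat \<Rightarrow> 'a) \<Rightarrow> (nat \<Rightarrow> 'a) \<Rightarrow> (nat \<times> nat) set set" where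
  "sigma_part G M N cs ds = ({..<M} \<times> {..<N}) // {((i, j), (i', j')).
      (i, j) \<in> {..<M} \<times> {..<N} \<and> (i', j') \<in> {..<M} \<times> {..<N} \<and>
      cs i \<otimes>\<^bsub>G\<^esub> ds j = cs i' \<otimes>\<^bsub>G\<^esub> ds j'}"

end

theory Submission
  imports Defs "HOL-Library.Countable_Set" "HOL-Algebra.Generated_Groups"
begin


definition rep :: "'i set \<Rightarrow> ('i \<Rightarrow> 'a) \<Rightarrow> ('i \<Rightarrow> 'k) \<Rightarrow> ('a \<Rightarrow> 'k::comm_monoid_add)" where
  "rep I a u = (\<lambda>g. \<Sum>i\<in>I. if a i = g then u i else 0)"

lemma rep_supp: "finite I \<Longrightarrow> gr_supp (rep I a u) \<subseteq> a ` I"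
proof
  fix x assume "x \<in> gr_supp (rep I a u)"
  then have "(\<Sum>i\<in>I. if a i = x then u i else 0) \<noteq> 0" by (simp add: gr_supp_def rep_def)
  then obtain i where "i \<in> I" "a i = x"
    proof (cases "\<exists>i\<in>I. a i = x")
      case False
      then have "(\<Sum>i\<in>I. if a i = x then u i else 0) = 0" by (intro sum.neutral) auto
      then show ?thesis using \<open>(\<Sum>i\<in>I. if a i = x then u i else 0) \<noteq> 0\<close> by simp
    qed blast
  then show "x \<in> a ` I" by auto
qed

lemma rep_filter: "finite I \<Longrightarrow> rep I a u h = (\<Sum>i\<in>{i\<in>I. a i = h}. u i)"
  unfolding rep_def by (simp add: sum.inter_filter)

lemma rep_out: "n \<notin> a ` I \<Longrightarrow> rep I a u n = 0"
  unfolding rep_def by (intro sum.neutral) auto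

lemma mult_rep:
  fixes u :: "'i \<Rightarrow> 'k::{comm_monoid_add,semiring_0}" and v :: "'j \<Rightarrow> 'k"
  assumes G: "group G" and fin: "finite I" "finite J"
    and sub: "a ` I \<subseteq> carrier G" "b ` J \<subseteq> carrier G"
  shows "gr_mult G (rep I a u) (rep J b v)
       = rep (I \<times> J) (\<lambda>(i,j). a i \<otimes>\<^bsub>G\<^esub> b j) (\<lambda>(i,j). u i * v j)"
proof
  fix g
  interpret group G by fact
  let ?x = "rep I a u" and ?y = "rep J b v"
  let ?Y = "\<lambda>h. ?y (inv\<^bsub>G\<^esub> h \<otimes>\<^bsub>G\<^esub> g)"
  show "gr_mult G ?x ?y g = rep (I \<times> J) (\<lambda>(i,j). a i \<otimes>\<^bsub>G\<^esub> b j) (\<lambda>(i,j). u i * v j) g"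
  proof (cases "g \<in> carrier G")
    case True
    have "gr_mult G ?x ?y g = (\<Sum>h\<in>gr_supp ?x. ?x h * ?Y h)"
      using True by (simp add: gr_mult_def)
    also have "\<dots> = (\<Sum>h\<in>a ` I. ?x h * ?Y h)"
      by (rule sum.mono_neutral_left) (use rep_supp[OF fin(1), of a u] in \<open>auto simp: fin gr_supp_def\<close>)
    also have "\<dots> = (\<Sum>h\<in>a ` I. \<Sum>i\<in>{i\<in>I. a i = h}. u i * ?Y (a i))"
      by (rule sum.cong) (auto simp: rep_filter[OF fin(1)] sum_distrib_right)
    also have "\<dots> = (\<Sum>i\<in>I. u i * ?Y (a i))"
      by (rule sum.image_gen[symmetric]) (rule fin)
    also have "\<dots> = (\<Sum>i\<in>I. \<Sum>j\<in>J. if a i \<otimes>\<^bsub>G\<^esub> b j = g then u i * v j else 0)"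
    proof (rule sum.cong[OF refl])
      fix i assume i: "i \<in> I"
      have "\<And>j. j \<in> J \<Longrightarrow> (b j = inv\<^bsub>G\<^esub> (a i) \<otimes>\<^bsub>G\<^esub> g) = (a i \<otimes>\<^bsub>G\<^esub> b j = g)"
        proof -
        fix j assume "j \<in> J"
        then have "b j \<in> carrier G" "a i \<in> carrier G" using i sub by auto
        then show "(b j = inv\<^bsub>G\<^esub> (a i) \<otimes>\<^bsub>G\<^esub> g) = (a i \<otimes>\<^bsub>G\<^esub> b j = g)"
          using inv_solve_left[of "b j" "a i" g] True by auto
      qed
      then show "u i * ?Y (a i) = (\<Sum>j\<in>J. if a i \<otimes>\<^bsub>G\<^esub> b j = g then u i * v j else 0)"
        unfolding rep_def sum_distrib_left by (intro sum.cong) auto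
    qed
    also have "\<dots> = rep (I \<times> J) (\<lambda>(i,j). a i \<otimes>\<^bsub>G\<^esub> b j) (\<lambda>(i,j). u i * v j) g"
      unfolding rep_def sum.cartesian_product by (intro sum.cong) (auto split: prod.splits)
    finally show ?thesis .
  next
    case False
    have "g \<notin> (\<lambda>(i,j). a i \<otimes>\<^bsub>G\<^esub> b j) ` (I \<times> J)"
      using False sub by auto
    then have "rep (I \<times> J) (\<lambda>(i,j). a i \<otimes>\<^bsub>G\<^esub> b j) (\<lambda>(i,j). u i * v j) g = 0"
      by (rule rep_out)
    moreover have "gr_mult G ?x ?y g = 0" using False by (simp add: gr_mult_def)
    ultimately show ?thesis by simp
  qed
qed

lemma gr_elem_rep: "finite I \<Longrightarrow> a ` I \<subseteq> carrier G \<Longrightarrow> gr_elem G (rep I a u)"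
  unfolding gr_elem_def
proof (intro conjI allI impI)
  assume "finite I" "a ` I \<subseteq> carrier G"
  show "finite {g. rep I a u g \<noteq> 0}"
    using rep_supp[OF \<open>finite I\<close>, of a u] \<open>finite I\<close> unfolding gr_supp_def
    by (meson finite_imageI finite_subset)
  fix g assume "g \<notin> carrier G"
  then show "rep I a u g = 0" using \<open>a ` I \<subseteq> carrier G\<close> unfolding rep_def
    by (intro sum.neutral) auto
qed

lemma elem_rep: "gr_elem G x \<Longrightarrow> rep (gr_supp x) id x = x"
proof
  fix g assume "gr_elem G x"
  then have fin: "finite (gr_supp x)" by (simp add: gr_elem_def gr_supp_def)
  show "rep (gr_supp x) id x g = x g"
  proof (cases "g \<in> gr_supp x")
    case True
    then show ?thesis unfolding rep_def using fin by (simp add: sum.delta)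
  next
    case False
    then show ?thesis unfolding rep_def using fin by (simp add: sum.delta gr_supp_def)
  qed
qed

lemma elem_supp_carrier: "gr_elem G x \<Longrightarrow> gr_supp x \<subseteq> carrier G"
  by (auto simp: gr_elem_def gr_supp_def)

lemma elem_fin: "gr_elem G x \<Longrightarrow> finite (gr_supp x)"
  by (auto simp: gr_elem_def gr_supp_def)

lemma one_rep: "gr_one G = rep {\<one>\<^bsub>G\<^esub>} id (\<lambda>_. 1)"
  by (auto simp: gr_one_def rep_def)

lemma rep_reindex:
  assumes "bij_betw h A B"
  shows "rep B a u = rep A (a \<circ> h) (u \<circ> h)"
proof
  fix g show "rep B a u g = rep A (a \<circ> h) (u \<circ> h) g"
    unfolding rep_def using sum.reindex_bij_betw[OF assms, of "\<lambda>i. if a i = g then u i else 0"] by (simp add: o_def cong: if_cong)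
qed

lemma rep_cong:
  "(\<And>i. i \<in> I \<Longrightarrow> a i = a' i) \<Longrightarrow> (\<And>i. i \<in> I \<Longrightarrow> u i = u' i) \<Longrightarrow> rep I a u = rep I a' u'"
  unfolding rep_def by (auto simp: fun_eq_iff intro!: sum.cong)

lemma mult_assoc_gr:
  fixes G (structure) and x y z :: "'a \<Rightarrow> 'k::{comm_monoid_add,semiring_0}"
  assumes G: "group G" and ex: "gr_elem G x" and ey: "gr_elem G y" and ez: "gr_elem G z"
  shows "gr_mult G (gr_mult G x y) z = gr_mult G x (gr_mult G y z)"
proof -
  interpret group G by fact
  let ?X = "gr_supp x" and ?Y = "gr_supp y" and ?Z = "gr_supp z"
  note fx = elem_fin[OF ex] and fy = elem_fin[OF ey] and fz = elem_fin[OF ez]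
  note cx = elem_supp_carrier[OF ex] and cy = elem_supp_carrier[OF ey] and cz = elem_supp_carrier[OF ez]
  have xy: "gr_mult G x y = rep (?X \<times> ?Y) (\<lambda>(i,j). i \<otimes> j) (\<lambda>(i,j). x i * y j)"
    using mult_rep[OF G fx fy, of id id x y] cx cy elem_rep[OF ex] elem_rep[OF ey] by simp
  have yz: "gr_mult G y z = rep (?Y \<times> ?Z) (\<lambda>(i,j). i \<otimes> j) (\<lambda>(i,j). y i * z j)"
    using mult_rep[OF G fy fz, of id id y z] cy cz elem_rep[OF ey] elem_rep[OF ez] by simp
  have sub1: "(\<lambda>(i,j). i \<otimes> j) ` (?X \<times> ?Y) \<subseteq> carrier G" using cx cy by auto
  have sub2: "(\<lambda>(i,j). i \<otimes> j) ` (?Y \<times> ?Z) \<subseteq> carrier G" using cz cy by auto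
  have L: "gr_mult G (gr_mult G x y) z = rep ((?X \<times> ?Y) \<times> ?Z)
      (\<lambda>(p,k). (fst p \<otimes> snd p) \<otimes> k) (\<lambda>(p,k). (x (fst p) * y (snd p)) * z k)"
    unfolding xy using mult_rep[OF G finite_cartesian_product[OF fx fy] fz sub1, of id "(\<lambda>(i,j). x i * y j)" z]
      cz elem_rep[OF ez] by (simp add: case_prod_beta)
  have R: "gr_mult G x (gr_mult G y z) = rep (?X \<times> (?Y \<times> ?Z))
      (\<lambda>(i,q). i \<otimes> (fst q \<otimes> snd q)) (\<lambda>(i,q). x i * (y (fst q) * z (snd q)))"
    unfolding yz using mult_rep[OF G fx finite_cartesian_product[OF fy fz] _ sub2, of id x "(\<lambda>(i,j). y i * z j)"]
      cx elem_rep[OF ex] by (simp add: case_prod_beta)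
  have bij: "bij_betw (\<lambda>(p,k). (fst p, (snd p, k))) ((?X \<times> ?Y) \<times> ?Z) (?X \<times> (?Y \<times> ?Z))"
    by (rule bij_betwI[where g="\<lambda>(i,q). ((i, fst q), snd q)"]) auto
  show ?thesis unfolding L R rep_reindex[OF bij]
    by (rule rep_cong) (auto simp: mult.assoc intro!: m_assoc dest: subsetD[OF cx] subsetD[OF cy] subsetD[OF cz])
qed

lemma mult_one_right:
  fixes G (structure) and x :: "'a \<Rightarrow> 'k::{comm_monoid_add,semiring_1}"
  assumes G: "group G" and ex: "gr_elem G x"
  shows "gr_mult G x (gr_one G) = x"
proof -
  interpret group G by fact
  note fx = elem_fin[OF ex] and cx = elem_supp_carrier[OF ex]
  have "gr_mult G x (gr_one G) = rep (gr_supp x \<times> {\<one>}) (\<lambda>(i,j). i \<otimes> j) (\<lambda>(i,j). x i)"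
    unfolding one_rep using mult_rep[OF G fx, of "{\<one>}" id id x "\<lambda>_. 1"] cx elem_rep[OF ex] one_rep[of G] by simp
  also have "\<dots> = rep (gr_supp x) id x"
    by (subst rep_reindex[of "\<lambda>i. (i, \<one>)" "gr_supp x"]) (auto intro!: rep_cong bij_betwI[where g=fst] dest: subsetD[OF cx])
  finally show ?thesis using elem_rep[OF ex] by simp
qed

lemma mult_one_left:
  fixes G (structure) and x :: "'a \<Rightarrow> 'k::{comm_monoid_add,semiring_1}"
  assumes G: "group G" and ex: "gr_elem G x"
  shows "gr_mult G (gr_one G) x = x"
proof -
  interpret group G by fact
  note fx = elem_fin[OF ex] and cx = elem_supp_carrier[OF ex]
  have "gr_mult G (gr_one G) x = rep ({\<one>} \<times> gr_supp x) (\<lambda>(i,j). i \<otimes> j) (\<lambda>(i,j). x j)"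
    unfolding one_rep using mult_rep[OF G _ fx, of "{\<one>}" id id "\<lambda>_. 1" x] cx elem_rep[OF ex] one_rep[of G] by simp
  also have "\<dots> = rep (gr_supp x) id x"
    by (subst rep_reindex[of "\<lambda>i. (\<one>, i)" "gr_supp x"]) (auto intro!: rep_cong bij_betwI[where g=snd] dest: subsetD[OF cx])
  finally show ?thesis using elem_rep[OF ex] by simp
qed



lemma (in group) foldr_closed: "set l \<subseteq> carrier G \<Longrightarrow> foldr (\<lambda>a b. a \<otimes> b) l \<one> \<in> carrier G"
  by (induction l) auto

lemma (in group) foldr_app_mult:
  "set l1 \<subseteq> carrier G \<Longrightarrow> set l2 \<subseteq> carrier G \<Longrightarrow>
   foldr (\<lambda>a b. a \<otimes> b) (l1 @ l2) \<one> = foldr (\<lambda>a b. a \<otimes> b) l1 \<one> \<otimes> foldr (\<lambda>a b. a \<otimes> b) l2 \<one>"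
  by (induction l1) (auto simp: m_assoc foldr_closed)

lemma (in group) generate_countable:
  assumes fin: "finite S" and sub: "S \<subseteq> carrier G"
  shows "countable (generate G S)"
proof -
  let ?T = "S \<union> m_inv G ` S"
  have T: "?T \<subseteq> carrier G" using sub by auto
  have "h \<in> (\<lambda>l. foldr (\<lambda>a b. a \<otimes> b) l \<one>) ` lists ?T" if "h \<in> generate G S" for h
    using that
  proof (induction rule: generate.induct)
    case one
    then show ?case by (auto intro!: image_eqI[where x="[]"])
  next
    case (incl h)
    then show ?case using sub by (auto intro!: image_eqI[where x="[h]"])
  next
    case (inv h)
    then show ?case using sub by (auto intro!: image_eqI[where x="[m_inv G h]"])
  next
    case (eng h1 h2)
    then obtain l1 l2 where l: "l1 \<in> lists ?T" "l2 \<in> lists ?T"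
      "h1 = foldr (\<lambda>a b. a \<otimes> b) l1 \<one>" "h2 = foldr (\<lambda>a b. a \<otimes> b) l2 \<one>" by auto
    have "set l1 \<subseteq> carrier G" "set l2 \<subseteq> carrier G" using l(1,2) T by auto
    then have "h1 \<otimes> h2 = foldr (\<lambda>a b. a \<otimes> b) (l1 @ l2) \<one>" using l(3,4) foldr_app_mult by (simp del: foldr_append)
    then show ?case using l(1,2) by (auto intro!: image_eqI[where x="l1 @ l2"])
  qed
  then have "generate G S \<subseteq> (\<lambda>l. foldr (\<lambda>a b. a \<otimes> b) l \<one>) ` lists ?T" by blast
  moreover have "countable ((\<lambda>l. foldr (\<lambda>a b. a \<otimes> b) l \<one>) ` lists ?T)"
    using fin by (intro countable_image countable_lists countable_finite) auto
  ultimately show ?thesis by (rule countable_subset)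
qed

lemma rep_inj_at: "finite I \<Longrightarrow> inj_on a I \<Longrightarrow> i \<in> I \<Longrightarrow> rep I a u (a i) = u i"
  unfolding rep_def
proof -
  assume "finite I" "inj_on a I" "i \<in> I"
  then have "(\<Sum>j\<in>I. if a j = a i then u j else 0) = (\<Sum>j\<in>I. if j = i then u j else 0)"
    by (intro sum.cong) (auto dest: inj_onD)
  then show "(\<Sum>j\<in>I. if a j = a i then u j else 0) = u i" using \<open>finite I\<close> \<open>i \<in> I\<close> by simp
qed


lemma rep_comp:
  assumes "inj_on f H" "m ` P \<subseteq> H"
  shows "rep P (\<lambda>p. f (m p)) w n = (if n \<in> f ` H then rep P m w (the_inv_into H f n) else 0)"
proof (cases "n \<in> f ` H")
  case True
  then obtain h where h: "h \<in> H" "n = f h" by auto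
  then have g: "the_inv_into H f n = h" using assms(1) by (simp add: the_inv_into_f_f)
  have "\<And>p. p \<in> P \<Longrightarrow> (f (m p) = n) = (m p = h)" using h assms by (auto dest: inj_onD)
  then show ?thesis using True g unfolding rep_def by (auto intro!: sum.cong)
next
  case False
  then have "\<And>p. p \<in> P \<Longrightarrow> f (m p) \<noteq> n" using assms by auto
  then show ?thesis using False unfolding rep_def by (auto intro!: sum.neutral)
qed

lemma transfer_df:
  fixes G :: "'a monoid" (structure) and x y :: "'a \<Rightarrow> 'k::division_ring"
  assumes G: "group G" and ex: "gr_elem G x" and ey: "gr_elem G y"
    and xy: "gr_mult G x y = gr_one G"
    and hyp: "\<forall>G' :: nat monoid. group G' \<longrightarrow> gr_df TYPE('k) G' (gr_rank x) (gr_rank y)"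
  shows "gr_mult G y x = gr_one G"
proof -
  interpret group G by fact
  let ?X = "gr_supp x" and ?Y = "gr_supp y"
  note fx = elem_fin[OF ex] and fy = elem_fin[OF ey]
  note cx = elem_supp_carrier[OF ex] and cy = elem_supp_carrier[OF ey]
  define H where "H = generate G (?X \<union> ?Y)"
  have sgH: "subgroup H G" unfolding H_def using cx cy by (intro generate_is_subgroup) auto
  have XH: "?X \<subseteq> H" and YH: "?Y \<subseteq> H" unfolding H_def by (auto intro: generate.incl)
  have "countable H" unfolding H_def using fx fy cx cy by (intro generate_countable) auto
  then obtain f :: "'a \<Rightarrow> nat" where inj: "inj_on f H" by (auto simp: countable_def)
  define g where "g = the_inv_into H f"
  have gf: "\<And>h. h \<in> H \<Longrightarrow> g (f h) = h" unfolding g_def using inj by (simp add: the_inv_into_f_f)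
  have fg: "\<And>n. n \<in> f ` H \<Longrightarrow> f (g n) = n" unfolding g_def using inj by (simp add: f_the_inv_into_f)
  have gH: "\<And>n. n \<in> f ` H \<Longrightarrow> g n \<in> H" using gf by auto
  have Hc: "\<And>h. h \<in> H \<Longrightarrow> h \<in> carrier G" using subgroup.subset[OF sgH] by blast
  have Hm: "\<And>h k. h \<in> H \<Longrightarrow> k \<in> H \<Longrightarrow> h \<otimes> k \<in> H" by (rule subgroup.m_closed[OF sgH])
  have Hi: "\<And>h. h \<in> H \<Longrightarrow> inv h \<in> H" by (rule subgroup.m_inv_closed[OF sgH])
  have H1: "\<one> \<in> H" by (rule subgroup.one_closed[OF sgH])
  define G' :: "nat monoid" where "G' = \<lparr>carrier = f ` H, mult = (\<lambda>a b. f (g a \<otimes> g b)), one = f \<one>\<rparr>"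
  have G'c: "carrier G' = f ` H" and G'm: "\<And>a b. a \<otimes>\<^bsub>G'\<^esub> b = f (g a \<otimes> g b)"
    and G'1: "\<one>\<^bsub>G'\<^esub> = f \<one>" by (simp_all add: G'_def)
  have G'mf: "\<And>h k. h \<in> H \<Longrightarrow> k \<in> H \<Longrightarrow> f h \<otimes>\<^bsub>G'\<^esub> f k = f (h \<otimes> k)"
    by (simp add: G'm gf)
  have grpG': "group G'"
  proof (rule groupI)
    show "\<And>a b. a \<in> carrier G' \<Longrightarrow> b \<in> carrier G' \<Longrightarrow> a \<otimes>\<^bsub>G'\<^esub> b \<in> carrier G'"
      using G'c G'mf Hm by auto
    show "\<one>\<^bsub>G'\<^esub> \<in> carrier G'" using G'c G'1 H1 by auto
    show "\<And>a b c. a \<in> carrier G' \<Longrightarrow> b \<in> carrier G' \<Longrightarrow> c \<in> carrier G' \<Longrightarrow>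
      a \<otimes>\<^bsub>G'\<^esub> b \<otimes>\<^bsub>G'\<^esub> c = a \<otimes>\<^bsub>G'\<^esub> (b \<otimes>\<^bsub>G'\<^esub> c)"
      using G'c G'mf Hm Hc by (auto simp: m_assoc)
    show "\<And>a. a \<in> carrier G' \<Longrightarrow> \<one>\<^bsub>G'\<^esub> \<otimes>\<^bsub>G'\<^esub> a = a"
      using G'c G'mf G'1 H1 Hc by auto
    show "\<And>a. a \<in> carrier G' \<Longrightarrow> \<exists>b\<in>carrier G'. b \<otimes>\<^bsub>G'\<^esub> a = \<one>\<^bsub>G'\<^esub>"
    proof -
      fix a assume "a \<in> carrier G'"
      then obtain h where h: "h \<in> H" "a = f h" using G'c by auto
      then have "f (inv h) \<otimes>\<^bsub>G'\<^esub> a = \<one>\<^bsub>G'\<^esub>" using G'mf Hi Hc G'1 by auto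
      then show "\<exists>b\<in>carrier G'. b \<otimes>\<^bsub>G'\<^esub> a = \<one>\<^bsub>G'\<^esub>" using h Hi G'c by auto
    qed
  qed
  define x' where "x' = rep ?X f x"
  define y' where "y' = rep ?Y f y"
  have injX: "inj_on f ?X" and injY: "inj_on f ?Y" using inj XH YH inj_on_subset by blast+
  have ex': "gr_elem G' x'" unfolding x'_def using XH G'c by (intro gr_elem_rep fx) auto
  have ey': "gr_elem G' y'" unfolding y'_def using YH G'c by (intro gr_elem_rep fy) auto
  have suppx: "gr_supp x' = f ` ?X"
  proof -
    have "gr_supp x' \<subseteq> f ` ?X" unfolding x'_def by (rule rep_supp[OF fx])
    moreover have "f ` ?X \<subseteq> gr_supp x'"
    proof
      fix n assume "n \<in> f ` ?X"
      then obtain h where h: "h \<in> ?X" "n = f h" by blast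
      have "rep ?X f x (f h) = x h" by (rule rep_inj_at[OF fx injX h(1)])
      then show "n \<in> gr_supp x'" using h unfolding x'_def by (simp add: gr_supp_def)
    qed
    ultimately show ?thesis by blast
  qed
  have suppy: "gr_supp y' = f ` ?Y"
  proof -
    have "gr_supp y' \<subseteq> f ` ?Y" unfolding y'_def by (rule rep_supp[OF fy])
    moreover have "f ` ?Y \<subseteq> gr_supp y'"
    proof
      fix n assume "n \<in> f ` ?Y"
      then obtain h where h: "h \<in> ?Y" "n = f h" by blast
      have "rep ?Y f y (f h) = y h" by (rule rep_inj_at[OF fy injY h(1)])
      then show "n \<in> gr_supp y'" using h unfolding y'_def by (simp add: gr_supp_def)
    qed
    ultimately show ?thesis by blast
  qed
  have rx: "gr_rank x' = gr_rank x" unfolding gr_rank_def suppx using card_image[OF injX] by simp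
  have ry: "gr_rank y' = gr_rank y" unfolding gr_rank_def suppy using card_image[OF injY] by simp
  have fXc: "f ` ?X \<subseteq> carrier G'" and fYc: "f ` ?Y \<subseteq> carrier G'" using XH YH G'c by auto
  have transf: "gr_mult G' (rep A f u) (rep B f v) n =
      (if n \<in> f ` H then gr_mult G (rep A id u) (rep B id v) (g n) else 0)"
    if AB: "A \<subseteq> H" "B \<subseteq> H" "finite A" "finite B" for A B and u v :: "'a \<Rightarrow> 'k" and n
  proof -
    have "gr_mult G' (rep A f u) (rep B f v) = rep (A \<times> B) (\<lambda>(i,j). f i \<otimes>\<^bsub>G'\<^esub> f j) (\<lambda>(i,j). u i * v j)"
      using AB G'c by (intro mult_rep grpG') auto
    also have "\<dots> = rep (A \<times> B) (\<lambda>p. f ((\<lambda>(i,j). i \<otimes> j) p)) (\<lambda>(i,j). u i * v j)"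
    proof (rule rep_cong)
      fix p assume "p \<in> A \<times> B"
      then obtain a b where ab: "p = (a,b)" "a \<in> H" "b \<in> H" using AB by blast
      then show "(\<lambda>(i,j). f i \<otimes>\<^bsub>G'\<^esub> f j) p = (\<lambda>p. f ((\<lambda>(i,j). i \<otimes> j) p)) p"
        by (simp add: G'mf)
    qed simp
    finally have eq: "gr_mult G' (rep A f u) (rep B f v) = rep (A \<times> B) (\<lambda>p. f ((\<lambda>(i,j). i \<otimes> j) p)) (\<lambda>(i,j). u i * v j)" .
    have imgH: "(\<lambda>(i,j). i \<otimes> j) ` (A \<times> B) \<subseteq> H" using AB Hm by auto
    have 1: "gr_mult G' (rep A f u) (rep B f v) n = (if n \<in> f ` H then
        rep (A \<times> B) (\<lambda>(i,j). i \<otimes> j) (\<lambda>(i,j). u i * v j) (g n) else 0)"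
      unfolding eq g_def by (rule rep_comp[OF inj imgH])
    have 2: "gr_mult G (rep A id u) (rep B id v) = rep (A \<times> B) (\<lambda>(i,j). i \<otimes> j) (\<lambda>(i,j). u i * v j)"
      using AB Hc mult_rep[OF G, of A B id id u v] by auto
    show ?thesis unfolding 1 2 ..
  qed
  have x'y': "gr_mult G' x' y' = gr_one G'"
  proof
    fix n
    have "gr_mult G' x' y' n = (if n \<in> f ` H then gr_mult G x y (g n) else 0)"
      unfolding x'_def y'_def using transf[OF XH YH fx fy, of x y n] elem_rep[OF ex] elem_rep[OF ey] by simp
    also have "\<dots> = gr_one G' n"
    proof (cases "n \<in> f ` H")
      case True
      then have "(g n = \<one>) = (n = f \<one>)" using fg gf H1 by metis
      then show ?thesis using True xy by (simp add: gr_one_def G'1)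
    next
      case False
      then show ?thesis using H1 by (auto simp: gr_one_def G'1)
    qed
    finally show "gr_mult G' x' y' n = gr_one G' n" .
  qed
  have "gr_df TYPE('k) G' (gr_rank x) (gr_rank y)" using hyp grpG' by blast
  then have y'x': "gr_mult G' y' x' = gr_one G'"
    unfolding gr_df_def using ex' ey' rx ry x'y' by blast
  show ?thesis
  proof
    fix m
    show "gr_mult G y x m = gr_one G m"
    proof (cases "m \<in> H")
      case True
      have "gr_mult G y x m = gr_mult G' y' x' (f m)"
        unfolding x'_def y'_def using transf[OF YH XH fy fx, of y x "f m"] elem_rep[OF ex] elem_rep[OF ey]
          True gf by simp
      also have "\<dots> = gr_one G m" using y'x' True H1 inj
        by (auto simp: gr_one_def G'1 dest: inj_onD)
      finally show ?thesis .
    next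
      case False
      have "gr_mult G y x = rep (?Y \<times> ?X) (\<lambda>(i,j). i \<otimes> j) (\<lambda>(i,j). y i * x j)"
        using mult_rep[OF G fy fx, of id id y x] cx cy elem_rep[OF ex] elem_rep[OF ey] by simp
      moreover have "m \<notin> (\<lambda>(i,j). i \<otimes> j) ` (?Y \<times> ?X)" using False XH YH Hm by auto
      ultimately have "gr_mult G y x m = 0" using rep_out by metis
      then show ?thesis using False H1 by (auto simp: gr_one_def)
    qed
  qed
qed



lemma block_sum:
  fixes w :: "'p \<Rightarrow> 'k::ring_1"
  assumes part: "partition_on U \<pi>" and finU: "finite U" and SU: "S \<subseteq> U"
    and closed: "\<forall>E\<in>\<pi>. E \<inter> S \<noteq> {} \<longrightarrow> E \<subseteq> S"
    and real: "\<forall>E\<in>\<pi>. sum w E = (if z \<in> E then 1 else 0)"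
    and zU: "z \<in> U"
  shows "sum w S = (if z \<in> S then 1 else 0)"
proof -
  let ?C = "{E\<in>\<pi>. E \<subseteq> S}"
  have Ueq: "U = \<Union>\<pi>" using part by (rule partition_onD1)
  have disj: "disjoint \<pi>" using part by (rule partition_onD2)
  have finpi: "finite \<pi>" using finite_elements[OF finU part] .
  have S: "S = \<Union>?C"
  proof
    show "S \<subseteq> \<Union>?C"
    proof
      fix p assume "p \<in> S"
      then obtain E where "E \<in> \<pi>" "p \<in> E" using SU Ueq by blast
      then show "p \<in> \<Union>?C" using closed \<open>p \<in> S\<close> by blast
    qed
  qed auto
  have finE: "\<forall>E\<in>?C. finite E" using Ueq finU by (auto intro: finite_subset)
  have dE: "\<forall>A\<in>?C. \<forall>B\<in>?C. A \<noteq> B \<longrightarrow> A \<inter> B = {}"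
    using disj by (auto simp: disjoint_def)
  have "sum w S = sum (sum w) ?C"
    using sum.Union_disjoint[OF finE dE, of w] S by simp
  also have "\<dots> = (\<Sum>E\<in>?C. if z \<in> E then 1 else 0)"
    using real by (intro sum.cong) auto
  also have "\<dots> = (if z \<in> S then 1 else 0)"
  proof (cases "z \<in> S")
    case True
    then obtain E0 where E0: "E0 \<in> \<pi>" "z \<in> E0" using Ueq zU by blast
    then have E0S: "E0 \<subseteq> S" using closed True by blast
    have "(\<Sum>E\<in>?C. if z \<in> E then (1::'k) else 0) = (\<Sum>E\<in>?C. if E = E0 then 1 else 0)"
    proof (intro sum.cong refl)
      fix E assume "E \<in> ?C"
      then have "z \<in> E \<longleftrightarrow> E = E0" using E0 disj by (auto simp: disjoint_def)
      then show "(if z \<in> E then (1::'k) else 0) = (if E = E0 then 1 else 0)" by simp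
    qed
    also have "\<dots> = 1" using finpi E0 E0S by (simp add: sum.delta)
    finally show ?thesis using True by simp
  next
    case False
    then have "\<forall>E\<in>?C. z \<notin> E" by auto
    then show ?thesis using False by (auto intro!: sum.neutral)
  qed
  finally show ?thesis .
qed

theorem lemma4p17:
  fixes G :: "'a monoid" and c d :: "'a \<Rightarrow> 'k::division_ring"
    and M N :: nat and cs ds :: "nat \<Rightarrow> 'a" and r s :: "nat \<Rightarrow> 'k"
  assumes "group G" and "M \<ge> 2" and "N \<ge> 2"
    and "gr_elem G c" and "gr_elem G d"
    and "gr_rank c = M" and "gr_rank d = N"
    and "\<one>\<^bsub>G\<^esub> \<in> gr_supp c" and "\<one>\<^bsub>G\<^esub> \<in> gr_supp d"
    and "gr_mult G c d = gr_one G"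
    and "\<forall>i<M. cs i \<in> carrier G" and "inj_on cs {..<M}"
    and "\<forall>j<N. ds j \<in> carrier G" and "inj_on ds {..<N}"
    and "\<forall>i<M. r i \<noteq> 0" and "\<forall>j<N. s j \<noteq> 0"
    and "cs 0 = \<one>\<^bsub>G\<^esub>" and "ds 0 = \<one>\<^bsub>G\<^esub>"
    and "\<forall>g. c g = (\<Sum>i<M. if cs i = g then r i else 0)"
    and "\<forall>g. d g = (\<Sum>j<N. if ds j = g then s j else 0)"
  shows
    "((\<forall>m. 2 \<le> m \<and> m < M \<longrightarrow> (\<forall>G' :: nat monoid. group G' \<longrightarrow> gr_df TYPE('k) G' m N)) \<longrightarrow>
        row_connected M (sigma_part G M N cs ds) \<and>
        (\<forall>\<pi>. partition_on ({..<M} \<times> {..<N}) \<pi> \<and> part_le \<pi> (sigma_part G M N cs ds)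
              \<and> realizable \<pi> r s \<longrightarrow> row_connected M \<pi>))
   \<and> ((\<forall>n. 2 \<le> n \<and> n < N \<longrightarrow> (\<forall>G' :: nat monoid. group G' \<longrightarrow> gr_df TYPE('k) G' M n)) \<longrightarrow>
        col_connected N (sigma_part G M N cs ds) \<and>
        (\<forall>\<pi>. partition_on ({..<M} \<times> {..<N}) \<pi> \<and> part_le \<pi> (sigma_part G M N cs ds)
              \<and> realizable \<pi> r s \<longrightarrow> col_connected N \<pi>))"
proof -
  note G = assms(1)
  interpret group G by fact
  define U where "U = {..<M} \<times> {..<N}"
  define m where "m = (\<lambda>(i::nat,j::nat). cs i \<otimes>\<^bsub>G\<^esub> ds j)"
  define w where "w = (\<lambda>(i::nat,j::nat). r i * s j)"
  define \<sigma> where "\<sigma> = sigma_part G M N cs ds"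
  define Rm where "Rm = {(p,q). p \<in> U \<and> q \<in> U \<and> m p = m q}"
  have csC: "cs ` {..<M} \<subseteq> carrier G" and dsC: "ds ` {..<N} \<subseteq> carrier G" using assms(11,13) by auto
  have cdef: "c = rep {..<M} cs r" using assms(19) by (auto simp: rep_def fun_eq_iff)
  have ddef: "d = rep {..<N} ds s" using assms(20) by (auto simp: rep_def fun_eq_iff)
  have finU: "finite U" unfolding U_def by simp
  have M0: "0 < M" and N0: "0 < N" and M1: "1 < M" and N1: "1 < N" using assms(2,3) by auto
  have U00: "(0,0) \<in> U" unfolding U_def using M0 N0 by simp
  have m00: "m (0,0) = \<one>\<^bsub>G\<^esub>" unfolding m_def using assms(17,18) by simp
  have ec: "gr_elem G c" and ed: "gr_elem G d" using assms(4,5) .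
  have cd: "rep U m w = gr_one G"
  proof -
    have "gr_mult G c d = rep U m w"
      unfolding cdef ddef U_def m_def w_def using csC dsC by (intro mult_rep G) auto
    then show ?thesis using assms(10) by simp
  qed
  have sigeq: "\<sigma> = U // Rm"
  proof -
    have "{((i, j), (i', j')). (i, j) \<in> {..<M} \<times> {..<N} \<and> (i', j') \<in> {..<M} \<times> {..<N} \<and>
      cs i \<otimes>\<^bsub>G\<^esub> ds j = cs i' \<otimes>\<^bsub>G\<^esub> ds j'} = Rm"
      unfolding Rm_def U_def m_def by auto
    then show ?thesis unfolding \<sigma>_def sigma_part_def U_def by simp
  qed
  have eqv: "equiv U Rm" unfolding Rm_def by (rule equivI) (auto simp: refl_on_def sym_def trans_def)
  have sig_blk: "\<And>F p q. F \<in> \<sigma> \<Longrightarrow> p \<in> F \<Longrightarrow> q \<in> F \<Longrightarrow> p \<in> U \<and> m p = m q"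
    unfolding sigeq quotient_def Rm_def by auto
  have sig_part: "partition_on U \<sigma>" unfolding sigeq by (rule partition_on_quotient[OF eqv])
  have sumA: "rep A m w g = gr_one G g"
    if pi: "partition_on U \<pi>" "part_le \<pi> \<sigma>" "realizable \<pi> r s" and A: "A \<subseteq> U" "(0,0) \<in> A"
      and clA: "\<forall>E\<in>\<pi>. E \<inter> A \<noteq> {} \<longrightarrow> E \<subseteq> A" for \<pi> A g
  proof -
    let ?S = "{p\<in>A. m p = g}"
    have finA: "finite A" using finite_subset[OF A(1) finU] .
    have "rep A m w g = sum w ?S" using rep_filter[OF finA] by simp
    also have "\<dots> = (if (0,0) \<in> ?S then 1 else 0)"
    proof (rule block_sum[OF pi(1) finU _ _ _ U00])
      show "?S \<subseteq> U" using A by auto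
      show "\<forall>E\<in>\<pi>. E \<inter> ?S \<noteq> {} \<longrightarrow> E \<subseteq> ?S"
      proof (intro ballI impI subsetI)
        fix E q assume E: "E \<in> \<pi>" "E \<inter> ?S \<noteq> {}" and q: "q \<in> E"
        then obtain p where p: "p \<in> E" "p \<in> A" "m p = g" by auto
        have "E \<subseteq> A" using clA E p by blast
        obtain F where "F \<in> \<sigma>" "E \<subseteq> F" using pi(2) E unfolding part_le_def by blast
        then have "m q = m p" using sig_blk p q by blast
        then show "q \<in> ?S" using \<open>E \<subseteq> A\<close> q p by auto
      qed
      show "\<forall>E\<in>\<pi>. sum w E = (if (0,0) \<in> E then 1 else 0)"
        using pi(3) unfolding realizable_def w_def by simp
    qed
    also have "\<dots> = gr_one G g" using A m00 by (auto simp: gr_one_def)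
    finally show ?thesis .
  qed
  have sig_real: "realizable \<sigma> r s"
    unfolding realizable_def
  proof
    fix F assume F: "F \<in> \<sigma>"
    then obtain q where q: "q \<in> U" "F = Rm `` {q}" unfolding sigeq quotient_def by blast
    have Feq: "F = {p\<in>U. m p = m q}" using q unfolding Rm_def by auto
    have "(\<Sum>(i,j)\<in>F. r i * s j) = sum w F" unfolding w_def by simp
    also have "\<dots> = rep U m w (m q)" unfolding Feq by (subst rep_filter[OF finU]) (rule refl)
    also have "\<dots> = (if m q = \<one>\<^bsub>G\<^esub> then 1 else 0)" using cd by (simp add: gr_one_def)
    also have "\<dots> = (if (0,0) \<in> F then 1 else 0)" using Feq U00 m00 by auto
    finally show "(\<Sum>(i,j)\<in>F. r i * s j) = (if (0,0) \<in> F then 1 else 0)" .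
  qed
  have sig_le: "part_le \<sigma> \<sigma>" unfolding part_le_def by blast
  have partU: "\<Union>\<pi> = U" if "partition_on U \<pi>" for \<pi> :: "(nat \<times> nat) set set"
    using partition_onD1[OF that] by simp
  have rowA: "row_connected M \<pi>" if "partition_on U \<pi>" "part_le \<pi> \<sigma>" "realizable \<pi> r s" and hypA: "\<forall>m. 2 \<le> m \<and> m < M \<longrightarrow> (\<forall>G' :: nat monoid. group G' \<longrightarrow> gr_df TYPE('k) G' m N)" for \<pi>
  proof (rule ccontr)
    assume nc: "\<not> row_connected M \<pi>"
    note pi = that(1-3)
    define R where "R = row_rel \<pi> \<union> (row_rel \<pi>)\<inverse>"
    define I where "I = {i. i < M \<and> (0, i) \<in> R\<^sup>*}"
    have symR: "sym (R\<^sup>*)" unfolding R_def by (intro sym_rtrancl sym_Un_converse)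
    have I0: "0 \<in> I" unfolding I_def using M0 by simp
    have IM: "I \<subseteq> {..<M}" unfolding I_def by auto
    have finI: "finite I" using IM finite_subset by blast
    have Icl: "i' \<in> I" if "E \<in> \<pi>" "(i,j) \<in> E" "(i',j') \<in> E" "i \<in> I" for E i j i' j'
    proof -
      have "(i,i') \<in> R" unfolding R_def row_rel_def using that(1-3) by blast
      then have "(0,i') \<in> R\<^sup>*" using that(4) unfolding I_def by (auto intro: rtrancl_into_rtrancl)
      moreover have "(i',j') \<in> U" using partU[OF pi(1)] that(1,3) by blast
      ultimately show ?thesis unfolding I_def U_def by auto
    qed
    obtain i0 where i0: "i0 < M" "i0 \<notin> I"
    proof -
      obtain a b where ab: "a < M" "b < M" "(a,b) \<notin> R\<^sup>*"
        using nc unfolding row_connected_def R_def by blast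
      have "\<not> (a \<in> I \<and> b \<in> I)"
      proof
        assume "a \<in> I \<and> b \<in> I"
        then have "(0,a) \<in> R\<^sup>*" "(0,b) \<in> R\<^sup>*" unfolding I_def by auto
        then have "(a,0) \<in> R\<^sup>*" using symR by (meson symD)
        then have "(a,b) \<in> R\<^sup>*" using \<open>(0,b) \<in> R\<^sup>*\<close> by (rule rtrancl_trans)
        then show False using ab by blast
      qed
      then show ?thesis using that ab by blast
    qed
    define A where "A = I \<times> {..<N}"
    have AU: "A \<subseteq> U" unfolding A_def U_def using IM by auto
    have A00: "(0,0) \<in> A" unfolding A_def using I0 N0 by auto
    have clA: "\<forall>E\<in>\<pi>. E \<inter> A \<noteq> {} \<longrightarrow> E \<subseteq> A"
    proof (intro ballI impI subsetI)
      fix E q assume E: "E \<in> \<pi>" "E \<inter> A \<noteq> {}" and q: "q \<in> E"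
      obtain i1 j1 where p: "(i1,j1) \<in> E" "(i1,j1) \<in> A" using E by auto
      obtain i j where qq: "q = (i,j)" by fastforce
      have "i \<in> I" using Icl[OF E(1) p(1) q[unfolded qq]] p(2) unfolding A_def by auto
      moreover have "q \<in> U" using partU[OF pi(1)] E(1) q by blast
      ultimately show "q \<in> A" unfolding A_def U_def qq by auto
    qed
    define c' where "c' = rep I cs r"
    have csI: "cs ` I \<subseteq> carrier G" using IM csC by auto
    have ec': "gr_elem G c'" unfolding c'_def by (rule gr_elem_rep[OF finI csI])
    have c'd: "gr_mult G c' d = gr_one G"
    proof -
      have "gr_mult G c' d = rep A m w"
        unfolding c'_def ddef A_def m_def w_def using csI dsC by (intro mult_rep G finI) auto
      also have "\<dots> = gr_one G" using sumA[OF pi AU A00 clA] by (simp add: fun_eq_iff)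
      finally show ?thesis .
    qed
    have injI: "inj_on cs I" using assms(12) IM inj_on_subset by blast
    show False
    proof (cases "card I \<ge> 2")
      case False
      have "card I \<noteq> 0" using finI I0 by auto
      then have "card I = 1" using False by simp
      then have Ieq: "I = {0}" using I0 by (metis card_1_singletonE singletonD)
      have injm: "inj_on m A"
      proof
        fix p q assume "p \<in> A" "q \<in> A" "m p = m q"
        then obtain j j' where "p = (0,j)" "q = (0,j')" "j < N" "j' < N" unfolding A_def Ieq by auto
        moreover have "m (0,j) = ds j" "m (0,j') = ds j'"
          unfolding m_def using assms(17) \<open>j<N\<close> \<open>j'<N\<close> assms(13) by auto
        ultimately show "p = q" using \<open>m p = m q\<close> assms(14) by (auto dest: inj_onD)
      qed
      have A01: "(0,1) \<in> A" unfolding A_def Ieq using N1 by auto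
      have finA: "finite A" using finI unfolding A_def by simp
      have "rep A m w (m (0,1)) = w (0,1)" by (rule rep_inj_at[OF finA injm A01])
      also have "\<dots> \<noteq> 0" unfolding w_def using assms(15,16) M0 N1 by simp
      finally have ne: "rep A m w (m (0,1)) \<noteq> 0" .
      have "m (0,1) = ds 1" unfolding m_def using assms(17) assms(13) N1 by auto
      moreover have "ds 1 \<noteq> \<one>\<^bsub>G\<^esub>" using assms(14,18) N1 N0 by (metis inj_onD lessThan_iff zero_neq_one)
      ultimately have "gr_one G (m (0,1)) = 0" by (simp add: gr_one_def)
      then show False using ne sumA[OF pi AU A00 clA, of "m (0,1)"] sumA[OF pi AU A00 clA, of "m (1,0)"] by metis
    next
      case True
      have IltM: "card I < M"
      proof -
        have "I \<subset> {..<M}" using IM i0 by auto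
        then show ?thesis using psubset_card_mono[of "{..<M}" I] by simp
      qed
      have suppc': "gr_supp c' = cs ` I"
      proof
        show "gr_supp c' \<subseteq> cs ` I" unfolding c'_def by (rule rep_supp[OF finI])
        show "cs ` I \<subseteq> gr_supp c'"
        proof
          fix g assume "g \<in> cs ` I"
          then obtain i where i: "i \<in> I" "g = cs i" by blast
          then have "i < M" using IM by auto
          then show "g \<in> gr_supp c'"
            using rep_inj_at[OF finI injI i(1), of r] assms(15) i unfolding c'_def gr_supp_def by auto
        qed
      qed
      have rk: "gr_rank c' = card I" unfolding gr_rank_def suppc' using card_image[OF injI] .
      have "\<forall>G' :: nat monoid. group G' \<longrightarrow> gr_df TYPE('k) G' (gr_rank c') (gr_rank d)"
        using hypA True IltM unfolding rk assms(7) by blast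
      then have dc': "gr_mult G d c' = gr_one G" by (rule transfer_df[OF G ec' ed c'd])
      have "c = gr_mult G c (gr_one G)" using mult_one_right[OF G ec] by simp
      also have "\<dots> = gr_mult G c (gr_mult G d c')" using dc' by simp
      also have "\<dots> = gr_mult G (gr_mult G c d) c'" using mult_assoc_gr[OF G ec ed ec'] by simp
      also have "\<dots> = c'" using assms(10) mult_one_left[OF G ec'] by simp
      finally have cc': "c = c'" .
      have "c (cs i0) = r i0" unfolding cdef using rep_inj_at[of "{..<M}" cs i0 r] assms(12) i0 by simp
      moreover have "c' (cs i0) = 0" unfolding c'_def
        by (rule rep_out) (use i0 IM assms(12) in \<open>auto dest: inj_onD\<close>)
      ultimately show False using cc' assms(15) i0 by simp
    qed
  qed
  have colB: "col_connected N \<pi>" if "partition_on U \<pi>" "part_le \<pi> \<sigma>" "realizable \<pi> r s" and hypB: "\<forall>n. 2 \<le> n \<and> n < N \<longrightarrow> (\<forall>G' :: nat monoid. group G' \<longrightarrow> gr_df TYPE('k) G' M n)" for \<pi>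
  proof (rule ccontr)
    assume nc: "\<not> col_connected N \<pi>"
    note pi = that(1-3)
    define R where "R = col_rel \<pi> \<union> (col_rel \<pi>)\<inverse>"
    define J where "J = {j. j < N \<and> (0, j) \<in> R\<^sup>*}"
    have symR: "sym (R\<^sup>*)" unfolding R_def by (intro sym_rtrancl sym_Un_converse)
    have J0: "0 \<in> J" unfolding J_def using N0 by simp
    have JN: "J \<subseteq> {..<N}" unfolding J_def by auto
    have finJ: "finite J" using JN finite_subset by blast
    have Jcl: "j' \<in> J" if "E \<in> \<pi>" "(i,j) \<in> E" "(i',j') \<in> E" "j \<in> J" for E i j i' j'
    proof -
      have "(j,j') \<in> R" unfolding R_def col_rel_def using that(1-3) by blast
      then have "(0,j') \<in> R\<^sup>*" using that(4) unfolding J_def by (auto intro: rtrancl_into_rtrancl)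
      moreover have "(i',j') \<in> U" using partU[OF pi(1)] that(1,3) by blast
      ultimately show ?thesis unfolding J_def U_def by auto
    qed
    obtain j0 where j0: "j0 < N" "j0 \<notin> J"
    proof -
      obtain a b where ab: "a < N" "b < N" "(a,b) \<notin> R\<^sup>*"
        using nc unfolding col_connected_def R_def by blast
      have "\<not> (a \<in> J \<and> b \<in> J)"
      proof
        assume "a \<in> J \<and> b \<in> J"
        then have "(0,a) \<in> R\<^sup>*" "(0,b) \<in> R\<^sup>*" unfolding J_def by auto
        then have "(a,0) \<in> R\<^sup>*" using symR by (meson symD)
        then have "(a,b) \<in> R\<^sup>*" using \<open>(0,b) \<in> R\<^sup>*\<close> by (rule rtrancl_trans)
        then show False using ab by blast
      qed
      then show ?thesis using that ab by blast
    qed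
    define A where "A = {..<M} \<times> J"
    have AU: "A \<subseteq> U" unfolding A_def U_def using JN by auto
    have A00: "(0,0) \<in> A" unfolding A_def using J0 M0 by auto
    have clA: "\<forall>E\<in>\<pi>. E \<inter> A \<noteq> {} \<longrightarrow> E \<subseteq> A"
    proof (intro ballI impI subsetI)
      fix E q assume E: "E \<in> \<pi>" "E \<inter> A \<noteq> {}" and q: "q \<in> E"
      obtain i1 j1 where p: "(i1,j1) \<in> E" "(i1,j1) \<in> A" using E by auto
      obtain i j where qq: "q = (i,j)" by fastforce
      have "j \<in> J" using Jcl[OF E(1) p(1) q[unfolded qq]] p(2) unfolding A_def by auto
      moreover have "q \<in> U" using partU[OF pi(1)] E(1) q by blast
      ultimately show "q \<in> A" unfolding A_def U_def qq by auto
    qed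
    define d' where "d' = rep J ds s"
    have dsJ: "ds ` J \<subseteq> carrier G" using JN dsC by auto
    have ed': "gr_elem G d'" unfolding d'_def by (rule gr_elem_rep[OF finJ dsJ])
    have cd': "gr_mult G c d' = gr_one G"
    proof -
      have "gr_mult G c d' = rep A m w"
        unfolding d'_def cdef A_def m_def w_def using dsJ csC by (intro mult_rep G finJ) auto
      also have "\<dots> = gr_one G" using sumA[OF pi AU A00 clA] by (simp add: fun_eq_iff)
      finally show ?thesis .
    qed
    have injJ: "inj_on ds J" using assms(14) JN inj_on_subset by blast
    show False
    proof (cases "card J \<ge> 2")
      case False
      have "card J \<noteq> 0" using finJ J0 by auto
      then have "card J = 1" using False by simp
      then have Jeq: "J = {0}" using J0 by (metis card_1_singletonE singletonD)
      have injm: "inj_on m A"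
      proof
        fix p q assume "p \<in> A" "q \<in> A" "m p = m q"
        then obtain i i' where "p = (i,0)" "q = (i',0)" "i < M" "i' < M" unfolding A_def Jeq by auto
        moreover have "m (i,0) = cs i" "m (i',0) = cs i'"
          unfolding m_def using assms(18) \<open>i<M\<close> \<open>i'<M\<close> assms(11) by auto
        ultimately show "p = q" using \<open>m p = m q\<close> assms(12) by (auto dest: inj_onD)
      qed
      have A10: "(1,0) \<in> A" unfolding A_def Jeq using M1 by auto
      have finA: "finite A" using finJ unfolding A_def by simp
      have "rep A m w (m (1,0)) = w (1,0)" by (rule rep_inj_at[OF finA injm A10])
      also have "\<dots> \<noteq> 0" unfolding w_def using assms(15,16) N0 M1 by simp
      finally have ne: "rep A m w (m (1,0)) \<noteq> 0" .
      have "m (1,0) = cs 1" unfolding m_def using assms(18) assms(11) M1 by auto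
      moreover have "cs 1 \<noteq> \<one>\<^bsub>G\<^esub>" using assms(12,17) M1 M0 by (metis inj_onD lessThan_iff zero_neq_one)
      ultimately have "gr_one G (m (1,0)) = 0" by (simp add: gr_one_def)
      then show False using ne sumA[OF pi AU A00 clA, of "m (0,1)"] sumA[OF pi AU A00 clA, of "m (1,0)"] by metis
    next
      case True
      have JltN: "card J < N"
      proof -
        have "J \<subset> {..<N}" using JN j0 by auto
        then show ?thesis using psubset_card_mono[of "{..<N}" J] by simp
      qed
      have suppd': "gr_supp d' = ds ` J"
      proof
        show "gr_supp d' \<subseteq> ds ` J" unfolding d'_def by (rule rep_supp[OF finJ])
        show "ds ` J \<subseteq> gr_supp d'"
        proof
          fix g assume "g \<in> ds ` J"
          then obtain i where i: "i \<in> J" "g = ds i" by blast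
          then have "i < N" using JN by auto
          then show "g \<in> gr_supp d'"
            using rep_inj_at[OF finJ injJ i(1), of s] assms(16) i unfolding d'_def gr_supp_def by auto
        qed
      qed
      have rk: "gr_rank d' = card J" unfolding gr_rank_def suppd' using card_image[OF injJ] .
      have "\<forall>G' :: nat monoid. group G' \<longrightarrow> gr_df TYPE('k) G' (gr_rank c) (gr_rank d')"
        using hypB True JltN unfolding rk assms(6) by blast
      then have d'c: "gr_mult G d' c = gr_one G" by (rule transfer_df[OF G ec ed' cd'])
      have "d' = gr_mult G d' (gr_one G)" using mult_one_right[OF G ed'] by simp
      also have "\<dots> = gr_mult G d' (gr_mult G c d)" using assms(10) by simp
      also have "\<dots> = gr_mult G (gr_mult G d' c) d" using mult_assoc_gr[OF G ed' ec ed] by simp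
      also have "\<dots> = d" using d'c mult_one_left[OF G ed] by simp
      finally have dd': "d' = d" .
      have "d (ds j0) = s j0" unfolding ddef using rep_inj_at[of "{..<N}" ds j0 s] assms(14) j0 by simp
      moreover have "d' (ds j0) = 0" unfolding d'_def
        by (rule rep_out) (use j0 JN assms(14) in \<open>auto dest: inj_onD\<close>)
      ultimately show False using dd' assms(16) j0 by simp
    qed
  qed
  show ?thesis using rowA colB sig_part sig_le sig_real unfolding \<sigma>_def U_def by blast
qed

end
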